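(* Let $\mathbf k$ be a commutative domain of characteristic zero, let $\phi(x)=\sum_{i=0}^r a_ix^i\in\mathbf k[x]$, and let $\omega=xy-\phi(x)$. The following are equivalent: (1) for every commutative Rota-Baxter algebra $(R,P)$ of weight $0$, the $\omega$-cover $\widetilde P$ of $P$ on $R^{\mathbb N}$ (weight-$0$ Hurwitz product) is a Rota-Baxter operator of weight $0$; (2) $\phi=a_0$ is constant, i.e. $\omega=xy-a_0$; (3) for every commutative Rota-Baxter algebra $(R,P)$ of weight $0$ and all $f\in R^{\mathbb N}$, $\widetilde P(f)=(P(f_0),a_0f_0,a_0f_1,a_0f_2,\dots)$.
   Context: A Rota-Baxter operator of weight $0$ on an algebra $A$ is a $\mathbf{k}$-linear $P$ with $P(x)P(y)=P(P(x)y)+P(xP(y))$. $R^{\mathbb N}$ is the set of sequences $(f_n)_{n\in\mathbb N}$ in $R$ with product $(fg)_n=\sum_{j=0}^n\binom{n}{j}f_{n-j}g_j$, and $(\partial_R f)_n=f_{n+1}$. For $\omega=xy-(\phi(x)+y\psi(x))$ with $\phi=\sum_{i=0}^r a_ix^i$, $\psi=\sum_{j=0}^s b_jx^j$ in $\mathbf k[x]$, the $\omega$-cover $\widetilde P$ of $P$ is the unique linear operator on $R^{\mathbb N}$ with $\widetilde P_0(f)=P(f_0)$ and $\widetilde P_n(f)=\sum_{i=0}^r a_if_{n-1+i}+\sum_{j=0}^s b_j\widetilde P_{n-1}(\partial_R^jf)$ for $n\ge1$, where $\widetilde P_n(f):=\widetilde P(f)_n$ (here $\psi=0$). *)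

theory Defs
  imports "HOL-Computational_Algebra.Polynomial" "HOL-Computational_Algebra.Fraction_Field"
begin

definition k_algebra :: "('k::comm_ring_1 \<Rightarrow> 'r::comm_ring_1 \<Rightarrow> 'r) \<Rightarrow> bool" where
  "k_algebra sc \<longleftrightarrow>
     (\<forall>c x y. sc c (x + y) = sc c x + sc c y) \<and>
     (\<forall>c d x. sc (c + d) x = sc c x + sc d x) \<and>
     (\<forall>c d x. sc (c * d) x = sc c (sc d x)) \<and>
     (\<forall>x. sc 1 x = x) \<and>
     (\<forall>c x y. sc c (x * y) = sc c x * y)"

definition rota_baxter0 :: "('k::comm_ring_1 \<Rightarrow> 'r::comm_ring_1 \<Rightarrow> 'r) \<Rightarrow> ('r \<Rightarrow> 'r) \<Rightarrow> bool" where
  "rota_baxter0 sc P \<longleftrightarrow>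
     (\<forall>x y. P (x + y) = P x + P y) \<and>
     (\<forall>c x. P (sc c x) = sc c (P x)) \<and>
     (\<forall>x y. P x * P y = P (P x * y) + P (x * P y))"

definition hurwitz_mult :: "(nat \<Rightarrow> 'r::comm_ring_1) \<Rightarrow> (nat \<Rightarrow> 'r) \<Rightarrow> nat \<Rightarrow> 'r" where
  "hurwitz_mult f g = (\<lambda>n. \<Sum>j\<le>n. of_nat (n choose j) * f (n - j) * g j)"

text \<open>The omega-cover of P for omega = xy - phi(x) (psi = 0), with
  phi = sum_{i=0}^{degree phi} (coeff phi i) x^i:
  cover_0(f) = P(f_0), cover_{n+1}(f) = sum_i a_i f_{n+i}.\<close>
fun omega_cover :: "('k::comm_ring_1 \<Rightarrow> 'r::comm_ring_1 \<Rightarrow> 'r) \<Rightarrow> 'k poly \<Rightarrow> ('r \<Rightarrow> 'r)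
     \<Rightarrow> (nat \<Rightarrow> 'r) \<Rightarrow> nat \<Rightarrow> 'r" where
  "omega_cover sc \<phi> P f 0 = P (f 0)"
| "omega_cover sc \<phi> P f (Suc n) = (\<Sum>i\<le>degree \<phi>. sc (coeff \<phi> i) (f (n + i)))"

definition cover_RB_for :: "'r::comm_ring_1 itself \<Rightarrow> 'k::comm_ring_1 poly \<Rightarrow> bool" where
  "cover_RB_for _ \<phi> \<longleftrightarrow>
     (\<forall>(sc :: 'k \<Rightarrow> 'r \<Rightarrow> 'r) P. k_algebra sc \<and> rota_baxter0 sc P \<longrightarrow>
        (\<forall>(f :: nat \<Rightarrow> 'r) (g :: nat \<Rightarrow> 'r) n.
           hurwitz_mult (omega_cover sc \<phi> P f) (omega_cover sc \<phi> P g) n =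
             omega_cover sc \<phi> P (hurwitz_mult (omega_cover sc \<phi> P f) g) n
           + omega_cover sc \<phi> P (hurwitz_mult f (omega_cover sc \<phi> P g)) n))"

definition cover_explicit_for :: "'r::comm_ring_1 itself \<Rightarrow> 'k::comm_ring_1 poly \<Rightarrow> bool" where
  "cover_explicit_for _ \<phi> \<longleftrightarrow>
     (\<forall>(sc :: 'k \<Rightarrow> 'r \<Rightarrow> 'r) P. k_algebra sc \<and> rota_baxter0 sc P \<longrightarrow>
        (\<forall>f :: nat \<Rightarrow> 'r. omega_cover sc \<phi> P f =
              (\<lambda>n. if n = 0 then P (f 0) else sc (coeff \<phi> 0) (f (n - 1)))))"

end

theory Submission
  imports Defs
begin

lemma ka_zero: "k_algebra sc \<Longrightarrow> sc c 0 = 0"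
  unfolding k_algebra_def by (metis add_cancel_right_right)

lemma ka_sum: "k_algebra sc \<Longrightarrow> sc c (\<Sum>j\<in>A. F j) = (\<Sum>j\<in>A. sc c (F j))"
proof (induction A rule: infinite_finite_induct)
  case (infinite A) then show ?case by (simp add: ka_zero)
next
  case empty then show ?case by (simp add: ka_zero)
next
  case (insert x F) then show ?case by (simp add: k_algebra_def)
qed

lemma ka_left: "k_algebra sc \<Longrightarrow> sc c (a * x) = a * sc c x"
  unfolding k_algebra_def by (metis mult.commute)

lemma ka_right: "k_algebra sc \<Longrightarrow> sc c (x * a) = sc c x * a"
  unfolding k_algebra_def by blast

lemma hm_sc_left:
  assumes "k_algebra sc"
  shows "hurwitz_mult (\<lambda>k. sc c (f k)) h n = sc c (hurwitz_mult f h n)"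
  unfolding hurwitz_mult_def ka_sum[OF assms]
proof (rule sum.cong)
  fix j
  have "sc c (of_nat (n choose j) * f (n - j) * h j) = sc c (of_nat (n choose j) * f (n - j)) * h j"
    by (rule ka_right[OF assms])
  also have "sc c (of_nat (n choose j) * f (n - j)) = of_nat (n choose j) * sc c (f (n - j))"
    by (rule ka_left[OF assms])
  finally show "of_nat (n choose j) * sc c (f (n - j)) * h j = sc c (of_nat (n choose j) * f (n - j) * h j)" by simp
qed simp

lemma hm_sc_right:
  assumes "k_algebra sc"
  shows "hurwitz_mult h (\<lambda>k. sc c (g k)) n = sc c (hurwitz_mult h g n)"
  unfolding hurwitz_mult_def ka_sum[OF assms]
  by (rule sum.cong) (simp_all add: ka_left[OF assms] mult.assoc)

lemma hm_leibniz:
  "hurwitz_mult f g (Suc n) = hurwitz_mult (\<lambda>k. f (Suc k)) g n + hurwitz_mult f (\<lambda>k. g (Suc k)) n"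
proof -
  have "hurwitz_mult f g (Suc n) = f (Suc n) * g 0 +
     (\<Sum>j\<le>n. of_nat (Suc n choose Suc j) * f (n - j) * g (Suc j))"
    unfolding hurwitz_mult_def by (subst sum.atMost_Suc_shift) simp
  also have "(\<Sum>j\<le>n. of_nat (Suc n choose Suc j) * f (n - j) * g (Suc j))
     = (\<Sum>j\<le>n. of_nat (n choose Suc j) * f (n - j) * g (Suc j))
       + (\<Sum>j\<le>n. of_nat (n choose j) * f (n - j) * g (Suc j))"
    unfolding sum.distrib[symmetric]
    by (rule sum.cong) (simp_all add: algebra_simps)
  also have "(\<Sum>j\<le>n. of_nat (n choose j) * f (n - j) * g (Suc j)) = hurwitz_mult f (\<lambda>k. g (Suc k)) n"
    unfolding hurwitz_mult_def by simp
  also have "f (Suc n) * g 0 + ((\<Sum>j\<le>n. of_nat (n choose Suc j) * f (n - j) * g (Suc j)) + hurwitz_mult f (\<lambda>k. g (Suc k)) n)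
     = (f (Suc n) * g 0 + (\<Sum>j\<le>n. of_nat (n choose Suc j) * f (n - j) * g (Suc j))) + hurwitz_mult f (\<lambda>k. g (Suc k)) n"
    by simp
  also have "f (Suc n) * g 0 + (\<Sum>j\<le>n. of_nat (n choose Suc j) * f (n - j) * g (Suc j)) = hurwitz_mult (\<lambda>k. f (Suc k)) g n"
  proof (cases n)
    case 0 then show ?thesis by (simp add: hurwitz_mult_def)
  next
    case (Suc m)
    have "(\<Sum>j\<le>Suc m. of_nat (Suc m choose Suc j) * f (Suc m - j) * g (Suc j))
        = (\<Sum>j\<le>m. of_nat (Suc m choose Suc j) * f (Suc (m - j)) * g (Suc j))"
      by (simp add: Suc_diff_le binomial_eq_0)
    moreover have "hurwitz_mult (\<lambda>k. f (Suc k)) g (Suc m) = f (Suc (Suc m)) * g 0 +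
       (\<Sum>j\<le>m. of_nat (Suc m choose Suc j) * f (Suc (m - j)) * g (Suc j))"
      unfolding hurwitz_mult_def by (subst sum.atMost_Suc_shift) simp
    ultimately show ?thesis using Suc by simp
  qed
  finally show ?thesis .
qed

lemma oc_const:
  assumes "\<phi> = [:coeff \<phi> 0:]"
  shows "omega_cover sc \<phi> P f (Suc n) = sc (coeff \<phi> 0) (f n)"
proof -
  have "degree \<phi> = 0" using assms by (metis degree_pCons_0)
  then show ?thesis by simp
qed

lemmas oc_const' = oc_const[simplified]

lemma const_explicit:
  assumes "\<phi> = [:coeff \<phi> 0:]"
  shows "cover_explicit_for TYPE('r::comm_ring_1) \<phi>"
  unfolding cover_explicit_for_def
proof (intro allI impI)
  fix sc :: "'a \<Rightarrow> 'r \<Rightarrow> 'r" and P f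
  show "omega_cover sc \<phi> P f = (\<lambda>n. if n = 0 then P (f 0) else sc (coeff \<phi> 0) (f (n - 1)))"
  proof
    fix n show "omega_cover sc \<phi> P f n = (if n = 0 then P (f 0) else sc (coeff \<phi> 0) (f (n - 1)))"
      by (cases n) (simp_all add: oc_const'[OF assms])
  qed
qed

lemma const_RB:
  assumes "\<phi> = [:coeff \<phi> 0:]"
  shows "cover_RB_for TYPE('r::comm_ring_1) \<phi>"
  unfolding cover_RB_for_def
proof (intro allI impI)
  fix sc :: "'a \<Rightarrow> 'r \<Rightarrow> 'r" and P f g n
  assume A: "k_algebra sc \<and> rota_baxter0 sc P"
  then have ka: "k_algebra sc" and rb: "rota_baxter0 sc P" by auto
  define c where "c = coeff \<phi> 0"
  let ?Q = "omega_cover sc \<phi> P"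
  have sh: "(\<lambda>k. ?Q h (Suc k)) = (\<lambda>k. sc c (h k))" for h
    unfolding c_def by (rule ext) (rule oc_const[OF assms])
  show "hurwitz_mult (?Q f) (?Q g) n = ?Q (hurwitz_mult (?Q f) g) n + ?Q (hurwitz_mult f (?Q g)) n"
  proof (cases n)
    case 0
    then show ?thesis using rb by (simp add: hurwitz_mult_def rota_baxter0_def)
  next
    case (Suc m)
    have "hurwitz_mult (?Q f) (?Q g) (Suc m) = sc c (hurwitz_mult f (?Q g) m) + sc c (hurwitz_mult (?Q f) g m)"
      by (simp only: hm_leibniz sh hm_sc_left[OF ka] hm_sc_right[OF ka])
    then show ?thesis using Suc by (simp add: oc_const'[OF assms] c_def)
  qed
qed

definition scF :: "'k::idom \<Rightarrow> 'k fract poly \<Rightarrow> 'k fract poly" where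
  "scF c p = smult (Fract c 1) p"

lemma Fract_add1: "Fract (c + d) 1 = Fract c 1 + Fract (d::'k::idom) 1"
  by simp

lemma scF_alg: "k_algebra scF"
  unfolding k_algebra_def scF_def
  by (simp add: smult_add_right smult_add_left Fract_add1 One_fract_def[symmetric] del: add_fract)

lemma rb_zero: "k_algebra sc \<Longrightarrow> rota_baxter0 sc (\<lambda>_. 0)"
  unfolding rota_baxter0_def by (simp add: ka_zero)

lemma scF_one_nz:
  assumes c: "c \<noteq> 0"
  shows "scF c 1 \<noteq> 0"
proof -
  have "Fract c 1 \<noteq> 0"
  proof
    assume "Fract c 1 = 0"
    then have "Fract c 1 = Fract 0 (1::'a)" by (simp only: Zero_fract_def)
    then have "c * 1 = 0 * 1" using eq_fract(1)[of 1 1 c 0] one_neq_zero by metis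
    then show False using c by simp
  qed
  then show ?thesis by (simp add: scF_def)
qed

lemma explicit_const:
  fixes \<phi> :: "'k::idom poly"
  assumes E: "cover_explicit_for TYPE('k fract poly) \<phi>"
  shows "\<phi> = [:coeff \<phi> 0:]"
proof (rule ccontr)
  assume ne: "\<phi> \<noteq> [:coeff \<phi> 0:]"
  define d where "d = degree \<phi>"
  have d0: "d \<noteq> 0"
  proof
    assume "d = 0"
    then have "[:coeff \<phi> 0:] = \<phi>" unfolding d_def by (rule degree_0_id)
    with ne show False by simp
  qed
  have lc: "coeff \<phi> d \<noteq> 0" using d0 d_def by auto
  define f :: "nat \<Rightarrow> 'k fract poly" where "f = (\<lambda>k. if k = d then 1 else 0)"
  have "omega_cover scF \<phi> (\<lambda>_. 0) f = (\<lambda>n. if n = 0 then 0 else scF (coeff \<phi> 0) (f (n - 1)))"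
    using E[unfolded cover_explicit_for_def, rule_format, OF conjI[OF scF_alg rb_zero[OF scF_alg]]] .
  then have "omega_cover scF \<phi> (\<lambda>_. 0) f (Suc 0) = scF (coeff \<phi> 0) (f 0)" by simp
  also have "\<dots> = 0" using d0 by (simp add: f_def ka_zero[OF scF_alg])
  finally have "(\<Sum>i\<le>d. scF (coeff \<phi> i) (f i)) = 0" by (simp add: d_def)
  moreover have "(\<Sum>i\<le>d. scF (coeff \<phi> i) (f i)) = (\<Sum>i\<le>d. if i = d then scF (coeff \<phi> d) 1 else 0)"
    by (rule sum.cong) (simp_all add: f_def ka_zero[OF scF_alg])
  moreover have "(\<Sum>i\<le>d. if i = d then scF (coeff \<phi> d) 1 else 0) = scF (coeff \<phi> d) 1"
    by (rule trans[OF sum.delta]) simp_all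
  ultimately show False using scF_one_nz[OF lc] by argo
qed

lemma hm_e0: "hurwitz_mult h (\<lambda>k. if k = 0 then 1 else 0) i = h i"
proof -
  have "hurwitz_mult h (\<lambda>k. if k = 0 then 1 else 0) i = (\<Sum>j\<le>i. if j = 0 then h i else 0)"
    unfolding hurwitz_mult_def by (rule sum.cong) auto
  then show ?thesis by simp
qed

lemma RB_const:
  fixes \<phi> :: "'k::idom poly"
  assumes R: "cover_RB_for TYPE('k fract poly) \<phi>"
  shows "\<phi> = [:coeff \<phi> 0:]"
proof (rule ccontr)
  assume ne: "\<phi> \<noteq> [:coeff \<phi> 0:]"
  define d where "d = degree \<phi>"
  have d0: "d \<noteq> 0"
  proof
    assume "d = 0"
    then have "[:coeff \<phi> 0:] = \<phi>" unfolding d_def by (rule degree_0_id)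
    with ne show False by simp
  qed
  have lc: "coeff \<phi> d \<noteq> 0" using d0 d_def by auto
  define m where "m = 2 * d - 1"
  define f :: "nat \<Rightarrow> 'k fract poly" where "f = (\<lambda>k. if k = m then 1 else 0)"
  define g :: "nat \<Rightarrow> 'k fract poly" where "g = (\<lambda>k. if k = 0 then 1 else 0)"
  let ?Q = "omega_cover scF \<phi> (\<lambda>_. 0)"
  have ka: "k_algebra scF" by (rule scF_alg)
  have eq: "hurwitz_mult (?Q f) (?Q g) 1 = ?Q (hurwitz_mult (?Q f) g) 1 + ?Q (hurwitz_mult f (?Q g)) 1"
    using R[unfolded cover_RB_for_def, rule_format, OF conjI[OF scF_alg rb_zero[OF scF_alg]]] .
  have lhs: "hurwitz_mult (?Q f) (?Q g) 1 = 0"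
    by (simp add: hurwitz_mult_def)
  have Qf: "?Q f i = (if i = d then scF (coeff \<phi> d) 1 else 0)" if "i \<le> d" for i
  proof (cases i)
    case 0 then show ?thesis using d0 by simp
  next
    case (Suc k)
    have "?Q f i = (\<Sum>l\<le>d. scF (coeff \<phi> l) (f (k + l)))" using Suc d_def by simp
    also have "\<dots> = (\<Sum>l\<le>d. if l = d \<and> i = d then scF (coeff \<phi> d) 1 else 0)"
      by (rule sum.cong) (use that Suc in \<open>auto simp: f_def m_def ka_zero[OF ka]\<close>)
    finally show ?thesis by simp
  qed
  have r1: "?Q (hurwitz_mult (?Q f) g) 1 = scF (coeff \<phi> d) (scF (coeff \<phi> d) 1)"
  proof -
    have "?Q (hurwitz_mult (?Q f) g) 1 = (\<Sum>i\<le>d. scF (coeff \<phi> i) (?Q f i))"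
      by (simp add: d_def g_def hm_e0)
    also have "\<dots> = (\<Sum>i\<le>d. if i = d then scF (coeff \<phi> d) (scF (coeff \<phi> d) 1) else 0)"
      by (rule sum.cong) (simp_all add: Qf ka_zero[OF ka])
    finally show ?thesis by simp
  qed
  have Qg0: "?Q g 0 = 0" by simp
  have hz: "hurwitz_mult f (?Q g) i = 0" if "i \<le> d" for i
    unfolding hurwitz_mult_def
  proof (rule sum.neutral, intro ballI)
    fix j assume j: "j \<in> {..i}"
    show "of_nat (i choose j) * f (i - j) * ?Q g j = 0"
    proof (cases "j = 0")
      case True then show ?thesis by simp
    next
      case False
      then have "i - j \<noteq> m" using that j d0 unfolding m_def by auto
      then show ?thesis by (simp add: f_def)
    qed
  qed
  have r2: "?Q (hurwitz_mult f (?Q g)) 1 = 0"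
  proof -
    have "?Q (hurwitz_mult f (?Q g)) 1 = (\<Sum>i\<le>d. scF (coeff \<phi> i) (hurwitz_mult f (?Q g) i))"
      by (simp add: d_def)
    also have "\<dots> = 0"
      by (rule sum.neutral) (simp add: hz ka_zero[OF ka])
    finally show ?thesis .
  qed
  have A: "scF (coeff \<phi> d) (scF (coeff \<phi> d) 1) = 0" using eq lhs r1 r2 by simp
  have B: "scF (coeff \<phi> d) (scF (coeff \<phi> d) 1) = scF (coeff \<phi> d * coeff \<phi> d) 1"
    by (simp add: scF_def)
  have C: "coeff \<phi> d * coeff \<phi> d \<noteq> 0" using lc by simp
  have "scF (coeff \<phi> d * coeff \<phi> d) 1 \<noteq> 0" by (rule scF_one_nz[OF C])
  then show False using A B by simp
qed

theorem proposition3p4: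
  fixes \<phi> :: "'k::{idom, ring_char_0} poly"
  shows "(cover_RB_for TYPE('k fract poly) \<phi> \<longleftrightarrow> \<phi> = [:coeff \<phi> 0:])
       \<and> (\<phi> = [:coeff \<phi> 0:] \<longleftrightarrow> cover_explicit_for TYPE('k fract poly) \<phi>)
       \<and> (\<phi> = [:coeff \<phi> 0:] \<longrightarrow>
            cover_RB_for TYPE('r::comm_ring_1) \<phi> \<and> cover_explicit_for TYPE('r) \<phi>)"
proof (intro conjI impI iffI)
  assume "cover_RB_for TYPE('k fract poly) \<phi>" then show "\<phi> = [:coeff \<phi> 0:]" by (rule RB_const)
next
  assume "\<phi> = [:coeff \<phi> 0:]" then show "cover_RB_for TYPE('k fract poly) \<phi>" by (rule const_RB)
next
  assume "\<phi> = [:coeff \<phi> 0:]" then show "cover_explicit_for TYPE('k fract poly) \<phi>" by (rule const_explicit)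
next
  assume "cover_explicit_for TYPE('k fract poly) \<phi>" then show "\<phi> = [:coeff \<phi> 0:]" by (rule explicit_const)
next
  assume "\<phi> = [:coeff \<phi> 0:]" then show "cover_RB_for TYPE('r::comm_ring_1) \<phi>" by (rule const_RB)
next
  assume "\<phi> = [:coeff \<phi> 0:]" then show "cover_explicit_for TYPE('r::comm_ring_1) \<phi>" by (rule const_explicit)
qed

end
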